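(* Let Assumption 1 hold and let $K_{\mathrm f}\in\mathbb{R}^{1\times 2n}$ be such that $A_{\mathrm f}+B_{\mathrm f}K_{\mathrm f}$ is Hurwitz. If the polynomial $s^n+c_1s^{n-1}+\dots+c_{n-1}s+c_n$ is Hurwitz, then the origin is globally asymptotically stable for the closed-loop system with state $(x,\zeta,\mu)\in\mathbb{R}^{3n}$ given by $\dot x=Ax+Bu$, $\dot\zeta=A_{\mathrm r}\zeta+B_{\mathrm r}u$, $\dot\mu=A_{\mathrm r}\mu+B_{\mathrm r}Cx$, $u=K_{\mathrm f}\,\mathrm{col}(\zeta,\mu)$.
   Context: Fix $n\ge 1$ and real numbers $a_1,\dots,a_n,b_1,\dots,b_n$. The plant is the continuous-time SISO system $y^{(n)}+a_1y^{(n-1)}+\dots+a_ny=b_1u^{(n-1)}+\dots+b_nu$, represented in observability canonical form $\dot x=Ax+Bu$, $y=Cx$, $x(t)\in\mathbb{R}^n$, where $C=[0_{1,n-1}\;1]$, $A$ is the $n\times n$ matrix whose first $n-1$ columns are $\begin{bmatrix}0_{1,n-1}\\ I_{n-1}\end{bmatrix}$ and whose last column is $(-a_n,\dots,-a_1)^\top$, and $B=(b_n,\dots,b_1)^\top$. Assumption 1: the polynomials $s^n+a_1s^{n-1}+\dots+a_n$ and $b_1s^{n-1}+\dots+b_n$ are coprime. For real parameters $c_1,\dots,c_n$, $A_{\mathrm r}\in\mathbb{R}^{n\times n}$ is the matrix whose first $n-1$ rows are $[0_{n-1,1}\;I_{n-1}]$ and whose last row is $(-c_n,\dots,-c_1)$,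 and $B_{\mathrm r}=(0,\dots,0,1)^\top\in\mathbb{R}^n$. Define $A_{\mathrm f}=\begin{bmatrix}A_{\mathrm r}&0_{n,n}\\ L_b& A_a\end{bmatrix}\in\mathbb{R}^{2n\times 2n}$, where $L_b\in\mathbb{R}^{n\times n}$ has all rows zero except the last, which equals $(b_n,\dots,b_1)$, and $A_a\in\mathbb{R}^{n\times n}$ has first $n-1$ rows $[0_{n-1,1}\;I_{n-1}]$ and last row $(-a_n,\dots,-a_1)$; and $B_{\mathrm f}=\mathrm{col}(0_{n-1,1},1,0_{n,1})\in\mathbb{R}^{2n}$. A square matrix is Hurwitz if all its eigenvalues have negative real part; a polynomial is Hurwitz if all its roots have negative real part. *)

theory Defs
  imports Complex_Main "Jordan_Normal_Form.Char_Poly" "HOL-Computational_Algebra.Polynomial"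
begin

text \<open>Indexing convention: matrix/vector entries are 0-based; the paper's
  coefficients a_k, b_k, c_k (k = 1..n) are given as functions nat => real,
  used at arguments 1..n.\<close>

(* Plant in observability canonical form *)
definition plant_A :: "nat \<Rightarrow> (nat \<Rightarrow> real) \<Rightarrow> real mat" where
  "plant_A n a = mat n n (\<lambda>(i,j). if j < n - 1 then (if i = j + 1 then 1 else 0) else - a (n - i))"

definition plant_B :: "nat \<Rightarrow> (nat \<Rightarrow> real) \<Rightarrow> real mat" where
  "plant_B n b = mat n 1 (\<lambda>(i,j). b (n - i))"

definition plant_C :: "nat \<Rightarrow> real mat" where
  "plant_C n = mat 1 n (\<lambda>(i,j). if j = n - 1 then 1 else 0)"

definition comp_mat :: "nat \<Rightarrow> (nat \<Rightarrow> real) \<Rightarrow> real mat" where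
  "comp_mat n p = mat n n (\<lambda>(i,j). if i < n - 1 then (if j = i + 1 then 1 else 0) else - p (n - j))"

definition A_r :: "nat \<Rightarrow> (nat \<Rightarrow> real) \<Rightarrow> real mat" where
  "A_r n c = comp_mat n c"

definition B_r :: "nat \<Rightarrow> real mat" where
  "B_r n = mat n 1 (\<lambda>(i,j). if i = n - 1 then 1 else 0)"

definition L_b :: "nat \<Rightarrow> (nat \<Rightarrow> real) \<Rightarrow> real mat" where
  "L_b n b = mat n n (\<lambda>(i,j). if i = n - 1 then b (n - j) else 0)"

definition A_a :: "nat \<Rightarrow> (nat \<Rightarrow> real) \<Rightarrow> real mat" where
  "A_a n a = comp_mat n a"

definition A_f :: "nat \<Rightarrow> (nat \<Rightarrow> real) \<Rightarrow> (nat \<Rightarrow> real) \<Rightarrow> (nat \<Rightarrow> real) \<Rightarrow> real mat" where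
  "A_f n a b c = four_block_mat (A_r n c) (0\<^sub>m n n) (L_b n b) (A_a n a)"

definition B_f :: "nat \<Rightarrow> real mat" where
  "B_f n = mat (2 * n) 1 (\<lambda>(i,j). if i = n - 1 then 1 else 0)"

definition hurwitz_mat :: "real mat \<Rightarrow> bool" where
  "hurwitz_mat M \<longleftrightarrow> (\<forall>ev. eigenvalue (map_mat complex_of_real M) ev \<longrightarrow> Re ev < 0)"

definition hurwitz_poly :: "real poly \<Rightarrow> bool" where
  "hurwitz_poly p \<longleftrightarrow> (\<forall>z. poly (map_poly complex_of_real p) z = 0 \<longrightarrow> Re z < 0)"

definition monic_poly :: "nat \<Rightarrow> (nat \<Rightarrow> real) \<Rightarrow> real poly" where
  "monic_poly n p = monom 1 n + (\<Sum>k=1..n. monom (p k) (n - k))"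

definition coef_poly :: "nat \<Rightarrow> (nat \<Rightarrow> real) \<Rightarrow> real poly" where
  "coef_poly n p = (\<Sum>k=1..n. monom (p k) (n - k))"

definition assumption1 :: "nat \<Rightarrow> (nat \<Rightarrow> real) \<Rightarrow> (nat \<Rightarrow> real) \<Rightarrow> bool" where
  "assumption1 n a b \<longleftrightarrow> coprime (monic_poly n a) (coef_poly n b)"

definition sc :: "real \<Rightarrow> real vec" where
  "sc u = vec 1 (\<lambda>_. u)"

(* componentwise derivative (right derivative at 0 via within {0..}) of a vector trajectory *)
definition vec_deriv :: "nat \<Rightarrow> (real \<Rightarrow> real vec) \<Rightarrow> real vec \<Rightarrow> real \<Rightarrow> bool" where
  "vec_deriv N f v t \<longleftrightarrow> (\<forall>i<N. ((\<lambda>s. f s $ i) has_real_derivative (v $ i)) (at t within {0..}))"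

definition closed_loop_sol ::
  "nat \<Rightarrow> (nat \<Rightarrow> real) \<Rightarrow> (nat \<Rightarrow> real) \<Rightarrow> (nat \<Rightarrow> real) \<Rightarrow> real mat
     \<Rightarrow> (real \<Rightarrow> real vec) \<Rightarrow> (real \<Rightarrow> real vec) \<Rightarrow> (real \<Rightarrow> real vec) \<Rightarrow> bool" where
  "closed_loop_sol n a b c Kf x \<zeta> \<mu> \<longleftrightarrow>
     (\<forall>t. x t \<in> carrier_vec n \<and> \<zeta> t \<in> carrier_vec n \<and> \<mu> t \<in> carrier_vec n) \<and>
     (\<forall>t\<ge>0. let u = (Kf *\<^sub>v (\<zeta> t @\<^sub>v \<mu> t)) $ 0 in
        vec_deriv n x (plant_A n a *\<^sub>v x t + plant_B n b *\<^sub>v sc u) t \<and>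
        vec_deriv n \<zeta> (A_r n c *\<^sub>v \<zeta> t + B_r n *\<^sub>v sc u) t \<and>
        vec_deriv n \<mu> (A_r n c *\<^sub>v \<mu> t + B_r n *\<^sub>v (plant_C n *\<^sub>v x t)) t)"

definition state_norm :: "nat \<Rightarrow> real vec \<Rightarrow> real vec \<Rightarrow> real vec \<Rightarrow> real" where
  "state_norm n x \<zeta> \<mu> = sqrt (\<Sum>i<n. (x $ i)\<^sup>2 + (\<zeta> $ i)\<^sup>2 + (\<mu> $ i)\<^sup>2)"

(* global asymptotic stability of the origin: Lyapunov stability + global attractivity *)
definition closed_loop_GAS :: "nat \<Rightarrow> (nat \<Rightarrow> real) \<Rightarrow> (nat \<Rightarrow> real) \<Rightarrow> (nat \<Rightarrow> real) \<Rightarrow> real mat \<Rightarrow> bool" where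
  "closed_loop_GAS n a b c Kf \<longleftrightarrow>
     (\<forall>\<epsilon>>0. \<exists>\<delta>>0. \<forall>x \<zeta> \<mu>. closed_loop_sol n a b c Kf x \<zeta> \<mu> \<longrightarrow>
          state_norm n (x 0) (\<zeta> 0) (\<mu> 0) < \<delta> \<longrightarrow> (\<forall>t\<ge>0. state_norm n (x t) (\<zeta> t) (\<mu> t) < \<epsilon>)) \<and>
     (\<forall>x \<zeta> \<mu>. closed_loop_sol n a b c Kf x \<zeta> \<mu> \<longrightarrow>
          ((\<lambda>t. state_norm n (x t) (\<zeta> t) (\<mu> t)) \<longlongrightarrow> 0) at_top)"

end

theory Submission
  imports Defs "Jordan_Normal_Form.Schur_Decomposition"
begin
lemma decr_from_deriv:
  fixes f f' :: "real \<Rightarrow> real"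
  assumes d: "\<And>t. t \<ge> 0 \<Longrightarrow> (f has_real_derivative f' t) (at t within {0..})"
    and n: "\<And>t. t \<ge> 0 \<Longrightarrow> f' t \<le> 0" and t: "t \<ge> 0"
  shows "f t \<le> f 0"
proof (rule DERIV_nonpos_imp_decreasing_open[OF t])
  fix x :: real assume x: "0 < x" "x < t"
  have "(f has_real_derivative f' x) (at x within {0..t})"
    using d[of x] x by (rule_tac DERIV_subset) auto
  moreover have "at x within {0..t} = at x"
    by (rule at_within_Icc_at) (use x in auto)
  ultimately show "\<exists>y. (f has_real_derivative y) (at x) \<and> y \<le> 0"
    using n[of x] x by auto
next
  show "continuous_on {0..t} f"
  proof (rule continuous_on_subset[of "{0..}"])
    show "continuous_on {0..} f"
      unfolding continuous_on_eq_continuous_within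
      using d DERIV_continuous by fastforce
  qed auto
qed
lemma sq_sum_le:
  fixes x :: "nat \<Rightarrow> real"
  shows "(\<Sum>i<N. x i)\<^sup>2 \<le> real N * (\<Sum>i<N. (x i)\<^sup>2)"
proof -
  have "(\<Sum>i<N. x i)\<^sup>2 = (\<Sum>i<N. \<Sum>j<N. x i * x j)"
    by (simp add: power2_eq_square sum_product)
  also have "\<dots> \<le> (\<Sum>i<N. \<Sum>j<N. ((x i)\<^sup>2 + (x j)\<^sup>2) / 2)"
  proof (intro sum_mono)
    fix i j
    have "0 \<le> (x i - x j)\<^sup>2" by simp
    then show "x i * x j \<le> ((x i)\<^sup>2 + (x j)\<^sup>2) / 2"
      by (simp add: power2_eq_square algebra_simps)
  qed
  also have "\<dots> = (\<Sum>i<N. \<Sum>j<N. (x i)\<^sup>2 / 2) + (\<Sum>i<N. \<Sum>j<N. (x j)\<^sup>2 / 2)"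
    by (simp add: sum.distrib add_divide_distrib)
  also have "\<dots> = real N * (\<Sum>i<N. (x i)\<^sup>2)"
    by (simp add: sum_distrib_left sum_divide_distrib[symmetric])
  finally show ?thesis .
qed

lemma mat_vec_bound:
  fixes G :: "complex mat"
  assumes G: "G \<in> carrier_mat N N"
  shows "\<exists>C\<ge>0. \<forall>v \<in> carrier_vec N.
     (\<Sum>i<N. (cmod ((G *\<^sub>v v) $ i))\<^sup>2) \<le> C * (\<Sum>j<N. (cmod (v $ j))\<^sup>2)"
proof -
  define gs where "gs = (\<Sum>i<N. \<Sum>j<N. cmod (G $$ (i,j)))"
  have gs0: "gs \<ge> 0" unfolding gs_def by (intro sum_nonneg) auto
  have gij: "cmod (G $$ (i,j)) \<le> gs" if "i < N" "j < N" for i j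
  proof -
    have "cmod (G $$ (i,j)) \<le> (\<Sum>j<N. cmod (G $$ (i,j)))"
      using that by (intro member_le_sum) auto
    also have "\<dots> \<le> gs" unfolding gs_def
      using that by (intro member_le_sum[where f = "\<lambda>i. \<Sum>j<N. cmod (G $$ (i,j))"] sum_nonneg) auto
    finally show ?thesis .
  qed
  show ?thesis
  proof (intro exI[of _ "real N * real N * gs\<^sup>2"] conjI ballI)
    show "0 \<le> real N * real N * gs\<^sup>2" by simp
    fix v :: "complex vec" assume v: "v \<in> carrier_vec N"
    define S where "S = (\<Sum>j<N. cmod (v $ j))"
    have S0: "S \<ge> 0" unfolding S_def by (intro sum_nonneg) auto
    have comp: "(cmod ((G *\<^sub>v v) $ i))\<^sup>2 \<le> gs\<^sup>2 * (real N * (\<Sum>j<N. (cmod (v $ j))\<^sup>2))" if i: "i < N" for i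
    proof -
      have "(G *\<^sub>v v) $ i = (\<Sum>j<N. G $$ (i,j) * v $ j)"
        using G v i by (simp add: scalar_prod_def lessThan_atLeast0)
      then have "cmod ((G *\<^sub>v v) $ i) \<le> (\<Sum>j<N. cmod (G $$ (i,j)) * cmod (v $ j))"
        by (metis (no_types, lifting) norm_mult norm_sum sum.cong)
      also have "\<dots> \<le> (\<Sum>j<N. gs * cmod (v $ j))"
        using gij i by (intro sum_mono mult_right_mono) auto
      also have "\<dots> = gs * S" unfolding S_def by (simp add: sum_distrib_left)
      finally have le: "cmod ((G *\<^sub>v v) $ i) \<le> gs * S" .
      have "(cmod ((G *\<^sub>v v) $ i))\<^sup>2 \<le> (gs * S)\<^sup>2"
        using le by (intro power_mono) auto
      also have "\<dots> = gs\<^sup>2 * S\<^sup>2" by (simp add: power_mult_distrib)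
      also have "\<dots> \<le> gs\<^sup>2 * (real N * (\<Sum>j<N. (cmod (v $ j))\<^sup>2))"
        unfolding S_def by (intro mult_left_mono sq_sum_le) auto
      finally show ?thesis .
    qed
    have "(\<Sum>i<N. (cmod ((G *\<^sub>v v) $ i))\<^sup>2) \<le> (\<Sum>i<N. gs\<^sup>2 * (real N * (\<Sum>j<N. (cmod (v $ j))\<^sup>2)))"
      using comp by (intro sum_mono) auto
    also have "\<dots> = real N * real N * gs\<^sup>2 * (\<Sum>j<N. (cmod (v $ j))\<^sup>2)" by simp
    finally show "(\<Sum>i<N. (cmod ((G *\<^sub>v v) $ i))\<^sup>2) \<le> real N * real N * gs\<^sup>2 * (\<Sum>j<N. (cmod (v $ j))\<^sup>2)" .
  qed
qed
definition diagm :: "nat \<Rightarrow> (nat \<Rightarrow> complex) \<Rightarrow> complex mat" where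
  "diagm N d = mat N N (\<lambda>(i,j). if i = j then d i else 0)"

lemma diagm_carrier[simp]: "diagm N d \<in> carrier_mat N N"
  unfolding diagm_def by simp

lemma diagm_mult_left: assumes X: "X \<in> carrier_mat N M" and i: "i < N" and j: "j < M"
  shows "(diagm N d * X) $$ (i,j) = d i * X $$ (i,j)"
proof -
  have "(diagm N d * X) $$ (i,j) = (\<Sum>k\<in>{0..<N}. (if i = k then d i else 0) * X $$ (k,j))"
    using X i j by (simp add: diagm_def scalar_prod_def)
  also have "\<dots> = d i * X $$ (i,j)"
    using i by (simp add: if_distrib[of "\<lambda>x. x * _"] cong: if_cong)
  finally show ?thesis .
qed

lemma diagm_mult_right: assumes X: "X \<in> carrier_mat M N" and i: "i < M" and j: "j < N"
  shows "(X * diagm N d) $$ (i,j) = X $$ (i,j) * d j"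
proof -
  have "(X * diagm N d) $$ (i,j) = (\<Sum>k\<in>{0..<N}. X $$ (i,k) * (if k = j then d k else 0))"
    using X i j by (simp add: diagm_def scalar_prod_def)
  also have "\<dots> = X $$ (i,j) * d j"
    using j by (simp add: if_distrib[of "\<lambda>x. _ * x"] cong: if_cong)
  finally show ?thesis .
qed

lemma diagm_mult_diagm: "diagm N d * diagm N e = diagm N (\<lambda>i. d i * e i)"
proof (rule eq_matI)
  fix i j assume "i < dim_row (diagm N (\<lambda>i. d i * e i))" "j < dim_col (diagm N (\<lambda>i. d i * e i))"
  then have i: "i < N" and j: "j < N" unfolding diagm_def by auto
  show "(diagm N d * diagm N e) $$ (i, j) = diagm N (\<lambda>i. d i * e i) $$ (i, j)"
    by (subst diagm_mult_left[OF diagm_carrier i j]) (use i j in \<open>simp add: diagm_def\<close>)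
qed (auto simp: diagm_def)

lemma schur_scaled:
  fixes M :: "complex mat"
  assumes M: "M \<in> carrier_mat N N"
    and H: "\<And>ev. eigenvalue M ev \<Longrightarrow> Re ev < 0"
  shows "\<exists>B R S \<alpha>. B \<in> carrier_mat N N \<and> R \<in> carrier_mat N N \<and> S \<in> carrier_mat N N \<and>
     S * R = 1\<^sub>m N \<and> R * M = B * R \<and> \<alpha> > 0 \<and> (\<forall>i<N. Re (B $$ (i,i)) \<le> - \<alpha>) \<and>
     (\<forall>i<N. \<forall>j<N. i \<noteq> j \<longrightarrow> 2 * real N * cmod (B $$ (i,j)) \<le> \<alpha>)"
proof -
  obtain es where es: "char_poly M = (\<Prod>a\<leftarrow>es. [:- a, 1:])"
    using char_poly_factorized[OF M] by auto
  obtain T P Q where sd: "schur_decomposition M es = (T,P,Q)"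
    by (cases "schur_decomposition M es") auto
  from schur_decomposition[OF M es sd] have sw: "similar_mat_wit M T P Q"
    and ut: "upper_triangular T" by auto
  note swd = similar_mat_witD2[OF M sw]
  have T: "T \<in> carrier_mat N N" and P: "P \<in> carrier_mat N N" and Q: "Q \<in> carrier_mat N N"
    using swd by auto
  have cp: "char_poly M = (\<Prod>a\<leftarrow>diag_mat T. [:- a, 1:])"
    using char_poly_similar[of M T] sw char_poly_upper_triangular[OF T ut]
    unfolding similar_mat_def by auto
  have diagneg: "Re (T $$ (i,i)) < 0" if i: "i < N" for i
  proof -
    have "T $$ (i,i) \<in> set (diag_mat T)" using T i by (auto simp: diag_mat_def)
    then have "poly (char_poly M) (T $$ (i,i)) = 0"
      unfolding cp by (auto simp: poly_prod_list_zero_iff)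
    then have "eigenvalue M (T $$ (i,i))" using eigenvalue_root_char_poly[OF M] by auto
    then show ?thesis using H by auto
  qed
  define \<alpha> where "\<alpha> = Min (insert 1 ((\<lambda>i. - Re (T $$ (i,i))) ` {..<N}))"
  have \<alpha>pos: "\<alpha> > 0" unfolding \<alpha>_def using diagneg by (subst Min_gr_iff) auto
  have \<alpha>le: "\<alpha> \<le> - Re (T $$ (i,i))" if "i < N" for i
    unfolding \<alpha>_def using that by (intro Min_le) auto
  define m where "m = (\<Sum>i<N. \<Sum>j<N. cmod (T $$ (i,j)))"
  have m0: "m \<ge> 0" unfolding m_def by (intro sum_nonneg) auto
  have mij: "cmod (T $$ (i,j)) \<le> m" if "i < N" "j < N" for i j
  proof -
    have "cmod (T $$ (i,j)) \<le> (\<Sum>j<N. cmod (T $$ (i,j)))"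
      using that by (intro member_le_sum) auto
    also have "\<dots> \<le> m" unfolding m_def
      using that by (intro member_le_sum[where f = "\<lambda>i. \<Sum>j<N. cmod (T $$ (i,j))"] sum_nonneg) auto
    finally show ?thesis .
  qed
  define s where "s = min 1 (\<alpha> / (2 * real N * (m + 1) + 1))"
  have s0: "s > 0" using \<alpha>pos m0 unfolding s_def
    by (auto intro!: divide_pos_pos add_nonneg_pos)
  have s2: "2 * real N * s * (m + 1) \<le> \<alpha>"
  proof -
    have pos: "2 * real N * (m + 1) + 1 > 0" using m0 by (intro add_nonneg_pos) auto
    have "s \<le> \<alpha> / (2 * real N * (m + 1) + 1)" unfolding s_def by simp
    then have "s * (2 * real N * (m + 1) + 1) \<le> \<alpha>" using pos by (simp add: pos_le_divide_eq)
    then show ?thesis using s0 by (simp add: algebra_simps)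
  qed
  have s1: "s \<le> 1" unfolding s_def by auto
  define D where "D = diagm N (\<lambda>i. complex_of_real (s ^ i))"
  define Di where "Di = diagm N (\<lambda>i. complex_of_real ((1/s) ^ i))"
  have DDi: "D * Di = 1\<^sub>m N" "Di * D = 1\<^sub>m N"
    unfolding D_def Di_def diagm_mult_diagm using s0
    by (auto intro!: eq_matI simp: diagm_def power_one_over field_simps)
  define B where "B = Di * T * D"
  define R where "R = Di * Q"
  define S where "S = P * D"
  have D: "D \<in> carrier_mat N N" and Di: "Di \<in> carrier_mat N N" unfolding D_def Di_def by auto
  have B: "B \<in> carrier_mat N N" and R: "R \<in> carrier_mat N N" and S: "S \<in> carrier_mat N N"
    unfolding B_def R_def S_def using D Di T P Q by auto
  have Bij: "B $$ (i,j) = complex_of_real ((1/s)^i) * T $$ (i,j) * complex_of_real (s^j)"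
    if "i < N" "j < N" for i j
  proof -
    have "B $$ (i,j) = (Di * T) $$ (i,j) * complex_of_real (s^j)"
      unfolding B_def D_def by (rule diagm_mult_right) (use Di T that in auto)
    also have "(Di * T) $$ (i,j) = complex_of_real ((1/s)^i) * T $$ (i,j)"
      unfolding Di_def by (rule diagm_mult_left) (use T that in auto)
    finally show ?thesis .
  qed
  have SR: "S * R = 1\<^sub>m N"
  proof -
    have "S * R = P * (D * Di) * Q" unfolding S_def R_def
      using P D Di Q by (simp add: assoc_mult_mat[of _ N N _ N _ N])
    also have "\<dots> = 1\<^sub>m N" using DDi swd P Q by simp
    finally show ?thesis .
  qed
  have QPX: "Q * (P * X) = X" if "X \<in> carrier_mat N nc" for X nc
    using that swd by (simp add: assoc_mult_mat[symmetric, of _ N N _ N _ nc])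
  have DDX: "D * (Di * X) = X" if "X \<in> carrier_mat N nc" for X nc
    using that DDi D Di by (simp add: assoc_mult_mat[symmetric, of _ N N _ N _ nc])
  have RM: "R * M = B * R"
  proof -
    have "R * M = Di * (Q * (P * (T * Q)))" unfolding R_def
      using swd Di by (simp add: assoc_mult_mat[of _ N N _ N _ N])
    also have "\<dots> = Di * (T * Q)" using QPX[of "T * Q" N] T Q by simp
    also have "\<dots> = Di * (T * (D * (Di * Q)))" using DDX[of Q N] Q by simp
    also have "\<dots> = B * R" unfolding B_def R_def
      using Di T D Q by (simp add: assoc_mult_mat[of _ N N _ N _ N])
    finally show ?thesis .
  qed
  have dg: "\<forall>i<N. Re (B $$ (i,i)) \<le> - \<alpha>"
  proof (intro allI impI)
    fix i assume i: "i < N"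
    have "B $$ (i,i) = T $$ (i,i)" using Bij[OF i i] s0
      by (simp add: power_one_over field_simps flip: of_real_mult)
    then show "Re (B $$ (i,i)) \<le> - \<alpha>" using \<alpha>le[OF i] by simp
  qed
  have od: "\<forall>i<N. \<forall>j<N. i \<noteq> j \<longrightarrow> 2 * real N * cmod (B $$ (i,j)) \<le> \<alpha>"
  proof (intro allI impI)
    fix i j assume i: "i < N" and j: "j < N" and ij: "i \<noteq> j"
    show "2 * real N * cmod (B $$ (i,j)) \<le> \<alpha>"
    proof (cases "j < i")
      case True
      then have "T $$ (i,j) = 0" using ut T i by auto
      then show ?thesis using Bij[OF i j] \<alpha>pos by simp
    next
      case False
      then have ij': "i < j" using ij by auto
      have "cmod (B $$ (i,j)) = s ^ j / s ^ i * cmod (T $$ (i,j))"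
        using Bij[OF i j] s0 by (simp add: norm_mult norm_divide norm_power power_one_over)
      also have "s ^ j / s ^ i = s ^ (j - i)" using s0 ij' by (simp add: power_diff)
      also have "s ^ (j - i) \<le> s" using s0 s1 ij'
        by (metis One_nat_def Suc_leI power_decreasing power_one_right zero_less_diff less_imp_le)
      finally have "cmod (B $$ (i,j)) \<le> s * cmod (T $$ (i,j))"
        by (simp add: mult_right_mono)
      also have "\<dots> \<le> s * (m + 1)" using mij[OF i j] s0 by (simp add: mult_left_mono)
      finally have "2 * real N * cmod (B $$ (i,j)) \<le> 2 * real N * (s * (m + 1))"
        by (simp add: mult_left_mono)
      then show ?thesis using s2 by (simp add: algebra_simps)
    qed
  qed
  show ?thesis using B R S SR RM \<alpha>pos dg od by blast
qed

lemma map_poly_of_real_sum: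
  "map_poly complex_of_real (\<Sum>k\<in>A. f k) = (\<Sum>k\<in>A. map_poly complex_of_real (f k))"
  by (induct A rule: infinite_finite_induct) (auto simp: of_real_hom.map_poly_hom_add)

lemma poly_monic_c: "poly (map_poly complex_of_real (monic_poly n c)) z = z^n + (\<Sum>k=1..n. complex_of_real (c k) * z^(n-k))"
  by (simp add: monic_poly_def of_real_hom.map_poly_hom_add map_poly_of_real_sum map_poly_monom poly_monom poly_sum)

definition compg :: "nat \<Rightarrow> (nat \<Rightarrow> 'a::comm_ring_1) \<Rightarrow> 'a mat" where
  "compg n p = mat n n (\<lambda>(i,j). if i < n - 1 then (if j = i + 1 then 1 else 0) else - p (n - j))"
definition plantAg :: "nat \<Rightarrow> (nat \<Rightarrow> 'a::comm_ring_1) \<Rightarrow> 'a mat" where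
  "plantAg n a = mat n n (\<lambda>(i,j). if j < n - 1 then (if i = j + 1 then 1 else 0) else - a (n - i))"
definition plantBg :: "nat \<Rightarrow> (nat \<Rightarrow> 'a::comm_ring_1) \<Rightarrow> 'a mat" where
  "plantBg n b = mat n 1 (\<lambda>(i,j). b (n - i))"
definition plantCg :: "nat \<Rightarrow> 'a::comm_ring_1 mat" where
  "plantCg n = mat 1 n (\<lambda>(i,j). if j = n - 1 then 1 else 0)"
definition Brg :: "nat \<Rightarrow> 'a::comm_ring_1 mat" where
  "Brg n = mat n 1 (\<lambda>(i,j). if i = n - 1 then 1 else 0)"
definition Lbg :: "nat \<Rightarrow> (nat \<Rightarrow> 'a::comm_ring_1) \<Rightarrow> 'a mat" where
  "Lbg n b = mat n n (\<lambda>(i,j). if i = n - 1 then b (n - j) else 0)"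
definition Bfg :: "nat \<Rightarrow> 'a::comm_ring_1 mat" where
  "Bfg n = mat (n + n) 1 (\<lambda>(i,j). if i = n - 1 then 1 else 0)"
definition Hg :: "nat \<Rightarrow> 'a::comm_ring_1 mat" where
  "Hg n = mat (n + n) n (\<lambda>(i,j). if i = n + n - 1 \<and> j = n - 1 then 1 else 0)"
definition Afg :: "nat \<Rightarrow> (nat \<Rightarrow> 'a::comm_ring_1) \<Rightarrow> (nat \<Rightarrow> 'a) \<Rightarrow> (nat \<Rightarrow> 'a) \<Rightarrow> 'a mat" where
  "Afg n a b c = four_block_mat (compg n c) (0\<^sub>m n n) (Lbg n b) (compg n a)"
definition Mclg :: "nat \<Rightarrow> (nat \<Rightarrow> 'a::comm_ring_1) \<Rightarrow> (nat \<Rightarrow> 'a) \<Rightarrow> (nat \<Rightarrow> 'a) \<Rightarrow> 'a mat \<Rightarrow> 'a mat" where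
  "Mclg n a b c K = four_block_mat (plantAg n a) (plantBg n b * K) (Hg n)
     (four_block_mat (compg n c) (0\<^sub>m n n) (0\<^sub>m n n) (compg n c) + Bfg n * K)"

lemma carriers[simp]:
  "compg n p \<in> carrier_mat n n" "plantAg n a \<in> carrier_mat n n" "plantBg n b \<in> carrier_mat n 1"
  "plantCg n \<in> carrier_mat 1 n" "Brg n \<in> carrier_mat n 1" "Lbg n b \<in> carrier_mat n n"
  "Bfg n \<in> carrier_mat (n + n) 1" "Hg n \<in> carrier_mat (n + n) n"
  "Afg n a b c \<in> carrier_mat (n + n) (n + n)"
  by (auto simp: compg_def plantAg_def plantBg_def plantCg_def Brg_def Lbg_def Bfg_def Hg_def Afg_def)

lemma Mclg_carrier: "K \<in> carrier_mat 1 (n + n) \<Longrightarrow> Mclg n a b c K \<in> carrier_mat (n + (n + n)) (n + (n + n))"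
  unfolding Mclg_def by (auto intro!: four_block_carrier_mat add_carrier_mat mult_carrier_mat[of _ _ 1] simp: Bfg_def)

lemma real_eqs:
  "plant_A n a = plantAg n a" "plant_B n b = plantBg n b" "plant_C n = plantCg n" "B_r n = Brg n"
  "A_r n c = compg n c" "B_f n = Bfg n" "A_f n a b c = Afg n a b c"
  by (simp_all add: plant_A_def plantAg_def plant_B_def plantBg_def plant_C_def plantCg_def B_r_def Brg_def
     A_r_def comp_mat_def compg_def B_f_def Bfg_def mult_2 A_f_def Afg_def L_b_def Lbg_def A_a_def)

lemma map_eqs:
  "map_mat complex_of_real (compg n p) = compg n (\<lambda>i. complex_of_real (p i))"
  "map_mat complex_of_real (plantAg n a) = plantAg n (\<lambda>i. complex_of_real (a i))"
  "map_mat complex_of_real (plantBg n b) = plantBg n (\<lambda>i. complex_of_real (b i))"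
  "map_mat complex_of_real (Lbg n b) = Lbg n (\<lambda>i. complex_of_real (b i))"
  "map_mat complex_of_real (Bfg n) = Bfg n"
  "map_mat complex_of_real (Hg n) = Hg n"
  by (auto intro!: eq_matI simp: compg_def plantAg_def plantBg_def Lbg_def Bfg_def Hg_def)

definition scg :: "'a \<Rightarrow> 'a vec" where "scg u = vec 1 (\<lambda>_. u)"

lemma scg_carrier[simp]: "scg u \<in> carrier_vec 1" and scg_dim[simp]: "dim_vec (scg u) = 1"
  by (auto simp: scg_def)

lemma sum_delta_mult:
  "(\<Sum>j\<in>{0..<(n::nat)}. (if j = k then 1 else 0) * (f j :: 'a::comm_ring_1)) = (if k < n then f k else 0)"
proof -
  have "(\<Sum>j\<in>{0..<n}. (if j = k then 1 else 0) * f j) = (\<Sum>j\<in>{0..<n}. if j = k then f j else 0)"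
    by (intro sum.cong) auto
  also have "\<dots> = (if k \<in> {0..<n} then f k else 0)" by (rule sum.delta) simp
  finally show ?thesis by simp
qed

lemma compg_mult: assumes v: "v \<in> carrier_vec n" and i: "i < n"
  shows "(compg n p *\<^sub>v v) $ i = (if i < n - 1 then v $ (i+1) else - (\<Sum>j<n. p (n-j) * v $ j))"
proof (cases "i < n - 1")
  case True
  show ?thesis using v i True by (auto simp: compg_def scalar_prod_def sum_delta_mult)
next
  case False
  have "(compg n p *\<^sub>v v) $ i = (\<Sum>j\<in>{0..<n}. - p (n - j) * v $ j)"
    using v i False by (auto simp: compg_def scalar_prod_def intro!: sum.cong)
  then show ?thesis using False by (simp add: lessThan_atLeast0 sum_negf)
qed

lemma plantAg_mult: assumes v: "v \<in> carrier_vec n" and i: "i < n" and n: "n \<ge> 1"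
  shows "(plantAg n a *\<^sub>v v) $ i = (if i = 0 then 0 else v $ (i - 1)) - a (n - i) * v $ (n - 1)"
proof -
  have "(plantAg n a *\<^sub>v v) $ i = (\<Sum>j\<in>{0..<n}. (if j < n - 1 then (if i = j + 1 then 1 else 0) else - a (n - i)) * v $ j)"
    using v i by (auto simp: plantAg_def scalar_prod_def intro!: sum.cong)
  also have "{0..<n} = insert (n - 1) {0..<n-1}" using n by auto
  also have "(\<Sum>j\<in>insert (n - 1) {0..<n-1}. (if j < n - 1 then (if i = j + 1 then 1 else 0) else - a (n - i)) * v $ j)
     = - a (n - i) * v $ (n - 1) + (\<Sum>j\<in>{0..<n-1}. (if i = j + 1 then v $ j else 0))"
    by (subst sum.insert) (auto intro!: sum.cong)
  also have "(\<Sum>j\<in>{0..<n-1}. (if i = j + 1 then v $ j else 0)) = (if i = 0 then 0 else v $ (i - 1))"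
  proof (cases i)
    case (Suc k)
    then have "(\<Sum>j\<in>{0..<n-1}. (if i = j + 1 then v $ j else 0)) = (\<Sum>j\<in>{0..<n-1}. (if j = k then v $ j else 0))"
      by (intro sum.cong) auto
    also have "\<dots> = v $ k" using Suc i by simp
    finally show ?thesis using Suc by simp
  qed simp
  finally show ?thesis by simp
qed

lemma plantBg_mult: assumes i: "i < n"
  shows "(plantBg n b *\<^sub>v scg u) $ i = b (n - i) * u"
  using i by (simp add: plantBg_def scalar_prod_def scg_def)

lemma Brg_mult: assumes i: "i < n"
  shows "(Brg n *\<^sub>v scg u) $ i = (if i = n - 1 then u else 0)"
  using i by (simp add: Brg_def scalar_prod_def scg_def)

lemma plantCg_mult: assumes v: "v \<in> carrier_vec n" and n: "n \<ge> 1"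
  shows "plantCg n *\<^sub>v v = scg (v $ (n - 1))"
proof (rule eq_vecI)
  fix i assume "i < dim_vec (scg (v $ (n - 1)))"
  then have i: "i = 0" by simp
  have "(plantCg n *\<^sub>v v) $ 0 = (if n - 1 < n then v $ (n - 1) else 0)"
    using v by (auto simp: plantCg_def scalar_prod_def sum_delta_mult)
  also have "\<dots> = v $ (n - 1)" using n by simp
  finally show "(plantCg n *\<^sub>v v) $ i = scg (v $ (n - 1)) $ i" using i by (simp add: scg_def)
qed (simp add: plantCg_def)

lemma Lbg_mult: assumes v: "v \<in> carrier_vec n" and i: "i < n"
  shows "(Lbg n b *\<^sub>v v) $ i = (if i = n - 1 then (\<Sum>j<n. b (n - j) * v $ j) else 0)"
  using v i by (auto simp: Lbg_def scalar_prod_def lessThan_atLeast0 intro!: sum.cong)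

lemma Bfg_mult: assumes i: "i < n + n"
  shows "(Bfg n *\<^sub>v scg u) $ i = (if i = n - 1 then u else 0)"
  using i by (simp add: Bfg_def scalar_prod_def scg_def)

lemma Hg_mult: assumes v: "v \<in> carrier_vec n" and i: "i < n + n"
  shows "(Hg n *\<^sub>v v) $ i = (if i = n + n - 1 then v $ (n - 1) else 0)"
proof (cases "i = n + n - 1")
  case True
  show ?thesis using v i True by (auto simp: Hg_def scalar_prod_def sum_delta_mult)
next
  case False
  then show ?thesis using v i by (auto simp: Hg_def scalar_prod_def intro!: sum.neutral)
qed

lemma K_vec: assumes K: "K \<in> carrier_mat 1 m" and w: "w \<in> carrier_vec m"
  shows "K *\<^sub>v w = scg ((K *\<^sub>v w) $ 0)"
  by (rule eq_vecI) (use K w in \<open>auto simp: scg_def\<close>)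

lemma dims[simp]: "dim_row (compg n p) = n" "dim_col (compg n p) = n" "dim_row (Brg n) = n"
  "dim_col (Brg n) = 1" "dim_row (Hg n) = n + n" "dim_col (Hg n) = n" "dim_row (Bfg n) = n + n"
  "dim_col (Bfg n) = 1" "dim_row (Lbg n b) = n" "dim_col (Lbg n b) = n" "dim_row (plantAg n a) = n"
  "dim_col (plantAg n a) = n" "dim_row (plantBg n b) = n" "dim_col (plantBg n b) = 1"
  "dim_row (plantCg n) = 1" "dim_col (plantCg n) = n"
  by (simp_all add: compg_def Brg_def Hg_def Bfg_def Lbg_def plantAg_def plantBg_def plantCg_def)

lemma Mclg_mult:
  fixes x \<zeta> \<mu> :: "'a::comm_ring_1 vec"
  assumes x: "x \<in> carrier_vec n" and z: "\<zeta> \<in> carrier_vec n" and m: "\<mu> \<in> carrier_vec n"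
    and K: "K \<in> carrier_mat 1 (n + n)" and n: "n \<ge> 1"
  defines "u \<equiv> (K *\<^sub>v (\<zeta> @\<^sub>v \<mu>)) $ 0"
  shows "Mclg n a b c K *\<^sub>v (x @\<^sub>v (\<zeta> @\<^sub>v \<mu>)) =
    (plantAg n a *\<^sub>v x + plantBg n b *\<^sub>v scg u) @\<^sub>v
    ((compg n c *\<^sub>v \<zeta> + Brg n *\<^sub>v scg u) @\<^sub>v (compg n c *\<^sub>v \<mu> + Brg n *\<^sub>v (plantCg n *\<^sub>v x)))"
proof -
  let ?w = "\<zeta> @\<^sub>v \<mu>"
  have w: "?w \<in> carrier_vec (n + n)" using z m by auto
  have Kw: "K *\<^sub>v ?w = scg u" unfolding u_def by (rule K_vec[OF K w])
  have FB: "four_block_mat (compg n c) (0\<^sub>m n n) (0\<^sub>m n n) (compg n c) \<in> carrier_mat (n + n) (n + n)"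
    by (intro four_block_carrier_mat) auto
  have BfK: "Bfg n * K \<in> carrier_mat (n + n) (n + n)" using K by (auto simp: Bfg_def)
  have "Mclg n a b c K *\<^sub>v (x @\<^sub>v ?w) = (plantAg n a *\<^sub>v x + (plantBg n b * K) *\<^sub>v ?w) @\<^sub>v
      (Hg n *\<^sub>v x + (four_block_mat (compg n c) (0\<^sub>m n n) (0\<^sub>m n n) (compg n c) + Bfg n * K) *\<^sub>v ?w)"
    unfolding Mclg_def
    by (rule four_block_mat_mult_vec[OF _ _ _ _ x w]) (use K FB BfK in \<open>auto simp: plantBg_def\<close>)
  also have "(plantBg n b * K) *\<^sub>v ?w = plantBg n b *\<^sub>v scg u"
    using assoc_mult_mat_vec[OF carriers(3) K w] Kw by simp
  also have "(four_block_mat (compg n c) (0\<^sub>m n n) (0\<^sub>m n n) (compg n c) + Bfg n * K) *\<^sub>v ?w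
     = (compg n c *\<^sub>v \<zeta> @\<^sub>v compg n c *\<^sub>v \<mu>) + Bfg n *\<^sub>v scg u"
    using add_mult_distrib_mat_vec[OF FB BfK w] assoc_mult_mat_vec[OF carriers(7) K w] Kw
      mult_mat_vec_split[OF carriers(1) carriers(1) z m] by simp
  also have "Hg n *\<^sub>v x + ((compg n c *\<^sub>v \<zeta> @\<^sub>v compg n c *\<^sub>v \<mu>) + Bfg n *\<^sub>v scg u)
     = (compg n c *\<^sub>v \<zeta> + Brg n *\<^sub>v scg u) @\<^sub>v (compg n c *\<^sub>v \<mu> + Brg n *\<^sub>v (plantCg n *\<^sub>v x))"
  proof (rule eq_vecI)
    fix i assume "i < dim_vec ((compg n c *\<^sub>v \<zeta> + Brg n *\<^sub>v scg u) @\<^sub>v (compg n c *\<^sub>v \<mu> + Brg n *\<^sub>v (plantCg n *\<^sub>v x)))"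
    then have i: "i < n + n" by (simp add: Brg_def)
    show "(Hg n *\<^sub>v x + ((compg n c *\<^sub>v \<zeta> @\<^sub>v compg n c *\<^sub>v \<mu>) + Bfg n *\<^sub>v scg u)) $ i
      = ((compg n c *\<^sub>v \<zeta> + Brg n *\<^sub>v scg u) @\<^sub>v (compg n c *\<^sub>v \<mu> + Brg n *\<^sub>v (plantCg n *\<^sub>v x))) $ i"
    proof (cases "i < n")
      case True
      then show ?thesis using i x n
        by (simp add: Hg_mult Bfg_mult Brg_mult del: index_mult_mat_vec)
    next
      case False
      then show ?thesis using i x n
        by (auto simp: Hg_mult Bfg_mult Brg_mult plantCg_mult simp del: index_mult_mat_vec)
    qed
  qed (simp add: Brg_def Hg_def)
  finally show ?thesis .
qed

lemma Afg_mult: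
  fixes \<zeta> \<mu> :: "'a::comm_ring_1 vec"
  assumes z: "\<zeta> \<in> carrier_vec n" and m: "\<mu> \<in> carrier_vec n"
    and K: "K \<in> carrier_mat 1 (n + n)"
  defines "u \<equiv> (K *\<^sub>v (\<zeta> @\<^sub>v \<mu>)) $ 0"
  shows "(Afg n a b c + Bfg n * K) *\<^sub>v (\<zeta> @\<^sub>v \<mu>) =
    (compg n c *\<^sub>v \<zeta> + Brg n *\<^sub>v scg u) @\<^sub>v (Lbg n b *\<^sub>v \<zeta> + compg n a *\<^sub>v \<mu>)"
proof -
  let ?w = "\<zeta> @\<^sub>v \<mu>"
  have w: "?w \<in> carrier_vec (n + n)" using z m by auto
  have Kw: "K *\<^sub>v ?w = scg u" unfolding u_def by (rule K_vec[OF K w])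
  have BfK: "Bfg n * K \<in> carrier_mat (n + n) (n + n)" using K by (auto simp: Bfg_def)
  have "(Afg n a b c + Bfg n * K) *\<^sub>v ?w = Afg n a b c *\<^sub>v ?w + Bfg n *\<^sub>v scg u"
    using add_mult_distrib_mat_vec[OF carriers(9) BfK w] assoc_mult_mat_vec[OF carriers(7) K w] Kw by simp
  also have "Afg n a b c *\<^sub>v ?w = (compg n c *\<^sub>v \<zeta> + 0\<^sub>m n n *\<^sub>v \<mu>) @\<^sub>v (Lbg n b *\<^sub>v \<zeta> + compg n a *\<^sub>v \<mu>)"
    unfolding Afg_def by (rule four_block_mat_mult_vec[OF _ _ carriers(6) _ z m]) auto
  also have "((compg n c *\<^sub>v \<zeta> + 0\<^sub>m n n *\<^sub>v \<mu>) @\<^sub>v (Lbg n b *\<^sub>v \<zeta> + compg n a *\<^sub>v \<mu>)) + Bfg n *\<^sub>v scg u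
    = (compg n c *\<^sub>v \<zeta> + Brg n *\<^sub>v scg u) @\<^sub>v (Lbg n b *\<^sub>v \<zeta> + compg n a *\<^sub>v \<mu>)"
  proof (rule eq_vecI)
    fix i assume "i < dim_vec ((compg n c *\<^sub>v \<zeta> + Brg n *\<^sub>v scg u) @\<^sub>v (Lbg n b *\<^sub>v \<zeta> + compg n a *\<^sub>v \<mu>))"
    then have i: "i < n + n" by (simp add: Brg_def)
    have z0: "\<And>i. i < n \<Longrightarrow> (0\<^sub>m n n *\<^sub>v \<mu>) $ i = 0" using m by simp
    show "(((compg n c *\<^sub>v \<zeta> + 0\<^sub>m n n *\<^sub>v \<mu>) @\<^sub>v (Lbg n b *\<^sub>v \<zeta> + compg n a *\<^sub>v \<mu>)) + Bfg n *\<^sub>v scg u) $ i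
     = ((compg n c *\<^sub>v \<zeta> + Brg n *\<^sub>v scg u) @\<^sub>v (Lbg n b *\<^sub>v \<zeta> + compg n a *\<^sub>v \<mu>)) $ i"
      using i m z0 by (cases "i < n") (auto simp: Bfg_mult Brg_mult simp del: index_mult_mat_vec)
  qed (simp add: Brg_def Bfg_def)
  finally show ?thesis .
qed
lemma lin_deriv:
  fixes z :: "real \<Rightarrow> real vec"
  assumes "\<And>k. k < N \<Longrightarrow> ((\<lambda>s. z s $ k) has_real_derivative z' k) (at t within X)"
  shows "((\<lambda>s. \<Sum>k<N. c k * z s $ k) has_real_derivative (\<Sum>k<N. c k * z' k)) (at t within X)"
proof -
  have "\<And>k. k \<in> {..<N} \<Longrightarrow> ((\<lambda>s. c k * z s $ k) has_real_derivative c k * z' k) (at t within X)"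
    using DERIV_cmult assms by blast
  from DERIV_sum[where S="{..<N}" and f="\<lambda>s k. c k * z s $ k" and f'="\<lambda>k. c k * z' k", OF this]
  show ?thesis .
qed

lemma sq_deriv:
  assumes "(f has_real_derivative f') (at t within X)"
  shows "((\<lambda>s. (f s)\<^sup>2) has_real_derivative (2 * f t * f')) (at t within X)"
  using assms by (auto intro!: derivative_eq_intros)

lemma quad_bound:
  fixes B :: "complex mat" and w :: "complex vec"
  assumes B: "B \<in> carrier_mat N N" and w: "w \<in> carrier_vec N" and a: "\<alpha> > 0"
    and dg: "\<forall>i<N. Re (B $$ (i,i)) \<le> - \<alpha>"
    and od: "\<forall>i<N. \<forall>j<N. i \<noteq> j \<longrightarrow> 2 * real N * cmod (B $$ (i,j)) \<le> \<alpha>"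
  shows "(\<Sum>i<N. Re (cnj (w $ i) * (B *\<^sub>v w) $ i)) \<le> - (\<alpha> / 2) * (\<Sum>i<N. (cmod (w $ i))\<^sup>2)"
proof -
  define V where "V = (\<Sum>i<N. (cmod (w $ i))\<^sup>2)"
  have V0: "V \<ge> 0" unfolding V_def by (intro sum_nonneg) auto
  define g where "g i j = (if i = j then - \<alpha> * (cmod (w $ i))\<^sup>2 else 0)
     + \<alpha> / (2 * real N) * (cmod (w $ i) * cmod (w $ j))" for i j
  have fg: "Re (cnj (w $ i) * (B $$ (i,j) * w $ j)) \<le> g i j" if i: "i < N" and j: "j < N" for i j
  proof -
    have N0: "real N > 0" using i by auto
    have nn: "0 \<le> \<alpha> / (2 * real N) * (cmod (w $ i) * cmod (w $ j))"
      using a N0 by (intro mult_nonneg_nonneg) auto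
    show ?thesis
    proof (cases "i = j")
      case True
      have "Re (cnj (w $ i) * (B $$ (i,i) * w $ i)) = Re (B $$ (i,i)) * ((Re (w $ i))\<^sup>2 + (Im (w $ i))\<^sup>2)"
        by (simp add: algebra_simps power2_eq_square)
      also have "\<dots> = Re (B $$ (i,i)) * (cmod (w $ i))\<^sup>2" by (simp add: cmod_power2)
      also have "\<dots> \<le> - \<alpha> * (cmod (w $ i))\<^sup>2"
        using dg i by (intro mult_right_mono) auto
      finally show ?thesis unfolding g_def using True nn by simp
    next
      case False
      have "Re (cnj (w $ i) * (B $$ (i,j) * w $ j)) \<le> cmod (cnj (w $ i) * (B $$ (i,j) * w $ j))"
        by (rule complex_Re_le_cmod)
      also have "\<dots> = cmod (B $$ (i,j)) * (cmod (w $ i) * cmod (w $ j))"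
        by (simp add: norm_mult)
      also have "\<dots> \<le> \<alpha> / (2 * real N) * (cmod (w $ i) * cmod (w $ j))"
      proof (intro mult_right_mono)
        show "cmod (B $$ (i,j)) \<le> \<alpha> / (2 * real N)"
          using od i j False N0 by (simp add: pos_le_divide_eq mult.commute)
      qed auto
      finally show ?thesis unfolding g_def using False by simp
    qed
  qed
  have "(\<Sum>i<N. Re (cnj (w $ i) * (B *\<^sub>v w) $ i))
      = (\<Sum>i<N. \<Sum>j<N. Re (cnj (w $ i) * (B $$ (i,j) * w $ j)))"
  proof (intro sum.cong refl)
    fix i assume "i \<in> {..<N}"
    then have "(B *\<^sub>v w) $ i = (\<Sum>j<N. B $$ (i,j) * w $ j)"
      using B w by (simp add: scalar_prod_def lessThan_atLeast0)
    then show "Re (cnj (w $ i) * (B *\<^sub>v w) $ i) = (\<Sum>j<N. Re (cnj (w $ i) * (B $$ (i,j) * w $ j)))"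
      by (simp add: sum_distrib_left)
  qed
  also have "\<dots> \<le> (\<Sum>i<N. \<Sum>j<N. g i j)"
    using fg by (intro sum_mono) auto
  also have "\<dots> = (\<Sum>i<N. - \<alpha> * (cmod (w $ i))\<^sup>2) + (\<Sum>i<N. \<Sum>j<N. \<alpha> / (2 * real N) * (cmod (w $ i) * cmod (w $ j)))"
    unfolding g_def by (simp add: sum.distrib sum_subtractf sum_negf)
  also have "(\<Sum>i<N. - \<alpha> * (cmod (w $ i))\<^sup>2) = - \<alpha> * V"
    unfolding V_def by (simp add: sum_distrib_left)
  also have "(\<Sum>i<N. \<Sum>j<N. \<alpha> / (2 * real N) * (cmod (w $ i) * cmod (w $ j))) = \<alpha> / (2 * real N) * (\<Sum>i<N. cmod (w $ i))\<^sup>2"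
  proof -
    have "(\<Sum>i<N. \<Sum>j<N. \<alpha> / (2 * real N) * (cmod (w $ i) * cmod (w $ j))) = \<alpha> / (2 * real N) * (\<Sum>i<N. \<Sum>j<N. cmod (w $ i) * cmod (w $ j))"
      by (simp add: sum_distrib_left)
    also have "(\<Sum>i<N. \<Sum>j<N. cmod (w $ i) * cmod (w $ j)) = (\<Sum>i<N. cmod (w $ i))\<^sup>2"
      by (simp only: power2_eq_square sum_product)
    finally show ?thesis .
  qed
  also have "- \<alpha> * V + \<alpha> / (2 * real N) * (\<Sum>i<N. cmod (w $ i))\<^sup>2 \<le> - \<alpha> * V + \<alpha> / 2 * V"
  proof -
    have "\<alpha> / (2 * real N) * (\<Sum>i<N. cmod (w $ i))\<^sup>2 \<le> \<alpha> / (2 * real N) * (real N * V)"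
      unfolding V_def using a by (intro mult_left_mono sq_sum_le) auto
    also have "\<dots> \<le> \<alpha> / 2 * V" using a V0 by (cases "N = 0") auto
    finally show ?thesis by linarith
  qed
  finally show ?thesis unfolding V_def by simp
qed


lemma hurwitz_decay:
  fixes M :: "real mat"
  assumes M: "M \<in> carrier_mat N N" and H: "hurwitz_mat M"
  shows "\<exists>K \<alpha>. K \<ge> 0 \<and> \<alpha> > 0 \<and> (\<forall>z. (\<forall>t. z t \<in> carrier_vec N) \<longrightarrow>
     (\<forall>t\<ge>0. vec_deriv N z (M *\<^sub>v z t) t) \<longrightarrow>
     (\<forall>t\<ge>0. (\<Sum>i<N. (z t $ i)\<^sup>2) \<le> K * exp (- \<alpha> * t) * (\<Sum>i<N. (z 0 $ i)\<^sup>2)))"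
proof -
  define Mc where "Mc = map_mat complex_of_real M"
  have Mc: "Mc \<in> carrier_mat N N" using M by (simp add: Mc_def)
  have HMc: "\<And>ev. eigenvalue Mc ev \<Longrightarrow> Re ev < 0" using H unfolding hurwitz_mat_def Mc_def by auto
  obtain B R S \<alpha> where B: "B \<in> carrier_mat N N" and R: "R \<in> carrier_mat N N"
    and S: "S \<in> carrier_mat N N" and SR: "S * R = 1\<^sub>m N" and RM: "R * Mc = B * R"
    and a: "\<alpha> > 0" and dg: "\<forall>i<N. Re (B $$ (i,i)) \<le> - \<alpha>"
    and od: "\<forall>i<N. \<forall>j<N. i \<noteq> j \<longrightarrow> 2 * real N * cmod (B $$ (i,j)) \<le> \<alpha>"
    using schur_scaled[OF Mc HMc] by blast
  obtain C1 where C1: "C1 \<ge> 0" "\<forall>v\<in>carrier_vec N. (\<Sum>i<N. (cmod ((S *\<^sub>v v) $ i))\<^sup>2) \<le> C1 * (\<Sum>j<N. (cmod (v $ j))\<^sup>2)"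
    using mat_vec_bound[OF S] by blast
  obtain C2 where C2: "C2 \<ge> 0" "\<forall>v\<in>carrier_vec N. (\<Sum>i<N. (cmod ((R *\<^sub>v v) $ i))\<^sup>2) \<le> C2 * (\<Sum>j<N. (cmod (v $ j))\<^sup>2)"
    using mat_vec_bound[OF R] by blast
  show ?thesis
  proof (rule exI[of _ "C1 * C2"], rule exI[of _ \<alpha>], intro conjI allI impI)
    show "0 \<le> C1 * C2" using C1 C2 by simp
    show "\<alpha> > 0" by (rule a)
    fix z :: "real \<Rightarrow> real vec" and t :: real
    assume zC: "\<forall>t. z t \<in> carrier_vec N" and zd: "\<forall>t\<ge>0. vec_deriv N z (M *\<^sub>v z t) t" and t: "t \<ge> 0"
    define zc where "zc s = map_vec complex_of_real (z s)" for s
    define w where "w s = R *\<^sub>v zc s" for s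
    define V where "V s = (\<Sum>i<N. (cmod (w s $ i))\<^sup>2)" for s
    define y where "y s = B *\<^sub>v w s" for s
    have zcC: "zc s \<in> carrier_vec N" for s using zC unfolding zc_def by auto
    have wC: "w s \<in> carrier_vec N" for s using zcC R unfolding w_def by auto
    have zdim: "dim_vec (z s) = N" for s using zC by auto
    have zci: "zc s $ i = complex_of_real (z s $ i)" if "i < N" for s i
      using zdim[of s] that unfolding zc_def by simp
    have sq: "(\<Sum>i<N. (z s $ i)\<^sup>2) = (\<Sum>i<N. (cmod (zc s $ i))\<^sup>2)" for s
      by (intro sum.cong refl) (simp add: zci)
    have zSw: "S *\<^sub>v w s = zc s" for s
      unfolding w_def using S R zcC SR by (simp add: assoc_mult_mat_vec[symmetric, of _ N N _ N])
    have up: "(\<Sum>i<N. (z s $ i)\<^sup>2) \<le> C1 * V s" for s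
      using C1(2)[rule_format, OF wC[of s]] unfolding sq V_def zSw .
    have low: "V s \<le> C2 * (\<Sum>i<N. (z s $ i)\<^sup>2)" for s
      using C2(2)[rule_format, OF zcC[of s]] unfolding sq V_def w_def .
    have wi: "w s $ i = (\<Sum>k<N. R $$ (i,k) * complex_of_real (z s $ k))" if "i < N" for s i
    proof -
      have dzc: "dim_vec (zc s) = N" using zcC[of s] by auto
      have "w s $ i = (\<Sum>k=0..<N. R $$ (i,k) * zc s $ k)"
        using that R by (simp add: w_def scalar_prod_def dzc)
      also have "\<dots> = (\<Sum>k=0..<N. R $$ (i,k) * complex_of_real (z s $ k))"
        by (intro sum.cong) (auto simp: zci)
      finally show ?thesis by (simp add: lessThan_atLeast0)
    qed
    have Vform: "V = (\<lambda>s. \<Sum>i<N. (\<Sum>k<N. Re (R $$ (i,k)) * z s $ k)\<^sup>2 + (\<Sum>k<N. Im (R $$ (i,k)) * z s $ k)\<^sup>2)"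
    proof
      fix s show "V s = (\<Sum>i<N. (\<Sum>k<N. Re (R $$ (i,k)) * z s $ k)\<^sup>2 + (\<Sum>k<N. Im (R $$ (i,k)) * z s $ k)\<^sup>2)"
        unfolding V_def by (intro sum.cong refl) (simp add: wi cmod_power2)
    qed
    have Mhom: "map_vec complex_of_real (M *\<^sub>v z s) = Mc *\<^sub>v zc s" for s
      by (rule eq_vecI) (use M zcC zdim in \<open>auto simp: Mc_def zc_def scalar_prod_def zdim intro!: sum.cong\<close>)
    have Rz': "(\<Sum>k<N. R $$ (i,k) * complex_of_real ((M *\<^sub>v z s) $ k)) = y s $ i" if i: "i < N" for i s
    proof -
      have "(\<Sum>k<N. R $$ (i,k) * complex_of_real ((M *\<^sub>v z s) $ k)) = (R *\<^sub>v map_vec complex_of_real (M *\<^sub>v z s)) $ i"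
        using i R M by (simp add: scalar_prod_def lessThan_atLeast0)
      also have "\<dots> = (R *\<^sub>v (Mc *\<^sub>v zc s)) $ i" by (simp add: Mhom)
      also have "\<dots> = ((R * Mc) *\<^sub>v zc s) $ i" using R Mc zcC by simp
      also have "\<dots> = ((B * R) *\<^sub>v zc s) $ i" by (simp add: RM)
      also have "\<dots> = y s $ i" unfolding y_def w_def using B R zcC by simp
      finally show ?thesis .
    qed
    have Vd: "(V has_real_derivative 2 * (\<Sum>i<N. Re (cnj (w s $ i) * y s $ i))) (at s within {0..})"
      if s: "s \<ge> 0" for s
    proof -
      have zd': "\<And>k. k < N \<Longrightarrow> ((\<lambda>s. z s $ k) has_real_derivative (M *\<^sub>v z s) $ k) (at s within {0..})"
        using zd s unfolding vec_deriv_def by auto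
      have "((\<lambda>s. \<Sum>i<N. (\<Sum>k<N. Re (R $$ (i,k)) * z s $ k)\<^sup>2 + (\<Sum>k<N. Im (R $$ (i,k)) * z s $ k)\<^sup>2)
          has_real_derivative (\<Sum>i<N. 2 * (\<Sum>k<N. Re (R $$ (i,k)) * z s $ k) * (\<Sum>k<N. Re (R $$ (i,k)) * (M *\<^sub>v z s) $ k)
             + 2 * (\<Sum>k<N. Im (R $$ (i,k)) * z s $ k) * (\<Sum>k<N. Im (R $$ (i,k)) * (M *\<^sub>v z s) $ k))) (at s within {0..})"
        by (intro DERIV_sum DERIV_add sq_deriv lin_deriv zd') auto
      moreover have "(\<Sum>i<N. 2 * (\<Sum>k<N. Re (R $$ (i,k)) * z s $ k) * (\<Sum>k<N. Re (R $$ (i,k)) * (M *\<^sub>v z s) $ k)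
             + 2 * (\<Sum>k<N. Im (R $$ (i,k)) * z s $ k) * (\<Sum>k<N. Im (R $$ (i,k)) * (M *\<^sub>v z s) $ k))
          = 2 * (\<Sum>i<N. Re (cnj (w s $ i) * y s $ i))"
      proof -
        have "(\<Sum>i<N. 2 * (\<Sum>k<N. Re (R $$ (i,k)) * z s $ k) * (\<Sum>k<N. Re (R $$ (i,k)) * (M *\<^sub>v z s) $ k)
             + 2 * (\<Sum>k<N. Im (R $$ (i,k)) * z s $ k) * (\<Sum>k<N. Im (R $$ (i,k)) * (M *\<^sub>v z s) $ k))
           = (\<Sum>i<N. 2 * Re (cnj (w s $ i) * y s $ i))"
        proof (intro sum.cong refl)
          fix i assume "i \<in> {..<N}"
          then have i: "i < N" by auto
          have reI: "Re (y s $ i) = (\<Sum>k<N. Re (R $$ (i,k)) * (M *\<^sub>v z s) $ k)"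
               "Im (y s $ i) = (\<Sum>k<N. Im (R $$ (i,k)) * (M *\<^sub>v z s) $ k)"
            using arg_cong[OF Rz'[OF i, of s], of Re] arg_cong[OF Rz'[OF i, of s], of Im] by auto
          have reW: "Re (w s $ i) = (\<Sum>k<N. Re (R $$ (i,k)) * z s $ k)"
               "Im (w s $ i) = (\<Sum>k<N. Im (R $$ (i,k)) * z s $ k)"
            by (simp_all add: wi[OF i])
          show "2 * (\<Sum>k<N. Re (R $$ (i,k)) * z s $ k) * (\<Sum>k<N. Re (R $$ (i,k)) * (M *\<^sub>v z s) $ k)
             + 2 * (\<Sum>k<N. Im (R $$ (i,k)) * z s $ k) * (\<Sum>k<N. Im (R $$ (i,k)) * (M *\<^sub>v z s) $ k)
             = 2 * Re (cnj (w s $ i) * y s $ i)"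
            unfolding reI[symmetric] reW[symmetric] by (simp add: algebra_simps)
        qed
        then show ?thesis by (simp add: sum_distrib_left)
      qed
      ultimately show ?thesis unfolding Vform by simp
    qed
    have qb: "(\<Sum>i<N. Re (cnj (w s $ i) * y s $ i)) \<le> - (\<alpha> / 2) * V s" for s
      unfolding y_def V_def by (rule quad_bound[OF B wC a dg od])
    define E where "E s = exp (\<alpha> * s) * V s" for s
    have Ed: "(E has_real_derivative (\<alpha> * exp (\<alpha> * s) * V s + exp (\<alpha> * s) * (2 * (\<Sum>i<N. Re (cnj (w s $ i) * y s $ i)))))
       (at s within {0..})" if "s \<ge> 0" for s
      unfolding E_def using Vd[OF that] by (auto intro!: derivative_eq_intros)
    have En: "\<alpha> * exp (\<alpha> * s) * V s + exp (\<alpha> * s) * (2 * (\<Sum>i<N. Re (cnj (w s $ i) * y s $ i))) \<le> 0" for s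
    proof -
      have "exp (\<alpha> * s) * (2 * (\<Sum>i<N. Re (cnj (w s $ i) * y s $ i))) \<le> exp (\<alpha> * s) * (2 * (- (\<alpha> / 2) * V s))"
        using qb[of s] by (intro mult_left_mono) auto
      then show ?thesis by (simp add: algebra_simps)
    qed
    have "E t \<le> E 0" by (rule decr_from_deriv[OF Ed En t])
    then have Vt: "V t \<le> exp (- \<alpha> * t) * V 0"
      unfolding E_def by (simp add: exp_minus field_simps)
    have "(\<Sum>i<N. (z t $ i)\<^sup>2) \<le> C1 * V t" by (rule up)
    also have "\<dots> \<le> C1 * (exp (- \<alpha> * t) * V 0)" using Vt C1 by (intro mult_left_mono) auto
    also have "\<dots> \<le> C1 * (exp (- \<alpha> * t) * (C2 * (\<Sum>i<N. (z 0 $ i)\<^sup>2)))"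
      using low[of 0] C1 by (intro mult_left_mono) auto
    finally show "(\<Sum>i<N. (z t $ i)\<^sup>2) \<le> C1 * C2 * exp (- \<alpha> * t) * (\<Sum>i<N. (z 0 $ i)\<^sup>2)"
      by (simp add: algebra_simps)
  qed
qed

lemma smult_append: "k \<cdot>\<^sub>v (v @\<^sub>v w) = (k \<cdot>\<^sub>v v) @\<^sub>v (k \<cdot>\<^sub>v w)"
  by (rule eq_vecI) auto

lemma reindex_rev: "(\<Sum>j<(n::nat). f (n - j) j) = (\<Sum>k=1..n. f k (n - k))"
  by (rule sum.reindex_bij_witness[of _ "\<lambda>k. n - k" "\<lambda>j. n - j"]) auto

lemma telescope:
  fixes x :: "nat \<Rightarrow> 'a::comm_ring_1"
  shows "(\<Sum>i<k. l^i * (l * x i - (if i = 0 then 0 else x (i - 1)))) = l^k * (if k = 0 then 0 else x (k - 1))"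
proof (induction k)
  case (Suc k)
  then show ?case by (cases k) (simp_all add: algebra_simps)
qed simp

lemma geo_comp:
  fixes \<zeta> :: "'a::comm_ring_1 vec"
  assumes z: "\<zeta> \<in> carrier_vec n"
    and E: "\<And>i. i < n \<Longrightarrow> (compg n p *\<^sub>v \<zeta> + Brg n *\<^sub>v scg u) $ i = l * \<zeta> $ i"
    and n: "n \<ge> 1"
  shows "\<forall>i<n. \<zeta> $ i = l^i * \<zeta> $ 0" and "u = (l^n + (\<Sum>k=1..n. p k * l^(n-k))) * \<zeta> $ 0"
proof -
  have step: "\<zeta> $ (i+1) = l * \<zeta> $ i" if i: "i < n - 1" for i
  proof -
    have "(compg n p *\<^sub>v \<zeta> + Brg n *\<^sub>v scg u) $ i = l * \<zeta> $ i" using E i by auto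
    then show ?thesis using i z by (simp add: compg_mult Brg_mult del: index_mult_mat_vec)
  qed
  show geo: "\<forall>i<n. \<zeta> $ i = l^i * \<zeta> $ 0"
  proof (intro allI impI)
    fix i assume "i < n" then show "\<zeta> $ i = l^i * \<zeta> $ 0"
    proof (induction i)
      case (Suc i)
      then show ?case using step[of i] by (simp add: algebra_simps)
    qed simp
  qed
  have last: "(compg n p *\<^sub>v \<zeta> + Brg n *\<^sub>v scg u) $ (n - 1) = l * \<zeta> $ (n - 1)" using E n by auto
  then have "- (\<Sum>j<n. p (n-j) * \<zeta> $ j) + u = l * \<zeta> $ (n - 1)"
    using z n by (simp add: compg_mult Brg_mult del: index_mult_mat_vec)
  moreover have "(\<Sum>j<n. p (n-j) * \<zeta> $ j) = (\<Sum>j<n. p (n-j) * l^j) * \<zeta> $ 0"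
  proof -
    have "(\<Sum>j<n. p (n-j) * \<zeta> $ j) = (\<Sum>j<n. p (n-j) * l^j * \<zeta> $ 0)"
    proof (intro sum.cong refl)
      fix j assume "j \<in> {..<n}"
      then have "\<zeta> $ j = l^j * \<zeta> $ 0" using geo by blast
      then show "p (n-j) * \<zeta> $ j = p (n-j) * l^j * \<zeta> $ 0" by (simp only: mult.assoc)
    qed
    then show ?thesis by (simp add: sum_distrib_right)
  qed
  moreover have "l * \<zeta> $ (n - 1) = l^n * \<zeta> $ 0"
  proof -
    obtain m where m: "n = Suc m" using n by (cases n) auto
    have "\<zeta> $ (n - 1) = l^(n-1) * \<zeta> $ 0" using geo[rule_format, of "n - 1"] n by linarith
    then have "\<zeta> $ (n - 1) = l^m * \<zeta> $ 0" using m by simp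
    then show ?thesis using m by simp
  qed
  moreover have "(\<Sum>j<n. p (n-j) * l^j) = (\<Sum>k=1..n. p k * l^(n-k))"
    by (rule reindex_rev[of "\<lambda>k j. p k * l^j"])
  ultimately show "u = (l^n + (\<Sum>k=1..n. p k * l^(n-k))) * \<zeta> $ 0"
    by (simp add: algebra_simps)
qed


lemma geo_sum:
  fixes \<zeta> :: "'a::comm_ring_1 vec"
  assumes geo: "\<forall>i<n. \<zeta> $ i = l^i * \<zeta> $ 0"
  shows "(\<Sum>j<n. f j * \<zeta> $ j) = (\<Sum>j<n. f j * l^j) * \<zeta> $ 0"
proof -
  have "(\<Sum>j<n. f j * \<zeta> $ j) = (\<Sum>j<n. f j * l^j * \<zeta> $ 0)"
  proof (intro sum.cong refl)
    fix j assume "j \<in> {..<n}"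
    then have "\<zeta> $ j = l^j * \<zeta> $ 0" using geo by blast
    then show "f j * \<zeta> $ j = f j * l^j * \<zeta> $ 0" by (simp only: mult.assoc)
  qed
  then show ?thesis by (simp add: sum_distrib_right)
qed

lemma eig_arg:
  fixes a b c :: "nat \<Rightarrow> 'a::field" and K :: "'a mat" and l :: 'a
  assumes n: "n \<ge> 1" and K: "K \<in> carrier_mat 1 (n + n)" and ev: "eigenvalue (Mclg n a b c K) l"
  shows "l^n + (\<Sum>k=1..n. c k * l^(n-k)) = 0 \<or> eigenvalue (Afg n a b c + Bfg n * K) l"
proof -
  define cp where "cp = l^n + (\<Sum>k=1..n. c k * l^(n-k))"
  obtain v where v: "eigenvector (Mclg n a b c K) v l" using ev unfolding eigenvalue_def by auto
  have MC: "Mclg n a b c K \<in> carrier_mat (n + (n + n)) (n + (n + n))" by (rule Mclg_carrier[OF K])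
  have vC: "v \<in> carrier_vec (n + (n + n))" and v0: "v \<noteq> 0\<^sub>v (n + (n + n))"
    and Mv: "Mclg n a b c K *\<^sub>v v = l \<cdot>\<^sub>v v" using v MC unfolding eigenvector_def by auto
  define x where "x = vec_first v n"
  define w where "w = vec_last v (n + n)"
  define \<zeta> where "\<zeta> = vec_first w n"
  define \<mu> where "\<mu> = vec_last w n"
  have xC: "x \<in> carrier_vec n" and wC: "w \<in> carrier_vec (n + n)" unfolding x_def w_def by auto
  have zC: "\<zeta> \<in> carrier_vec n" and mC: "\<mu> \<in> carrier_vec n" unfolding \<zeta>_def \<mu>_def by auto
  have wsplit: "\<zeta> @\<^sub>v \<mu> = w" unfolding \<zeta>_def \<mu>_def by (rule vec_first_last_append[OF wC])
  have vsplit: "x @\<^sub>v (\<zeta> @\<^sub>v \<mu>) = v" unfolding wsplit x_def w_def by (rule vec_first_last_append[OF vC])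
  define u where "u = (K *\<^sub>v (\<zeta> @\<^sub>v \<mu>)) $ 0"
  define y where "y = x $ (n - 1)"
  have Mv': "Mclg n a b c K *\<^sub>v (x @\<^sub>v (\<zeta> @\<^sub>v \<mu>)) = l \<cdot>\<^sub>v (x @\<^sub>v (\<zeta> @\<^sub>v \<mu>))"
    unfolding vsplit by (rule Mv)
  have "(plantAg n a *\<^sub>v x + plantBg n b *\<^sub>v scg u) @\<^sub>v
    ((compg n c *\<^sub>v \<zeta> + Brg n *\<^sub>v scg u) @\<^sub>v (compg n c *\<^sub>v \<mu> + Brg n *\<^sub>v (plantCg n *\<^sub>v x)))
    = (l \<cdot>\<^sub>v x) @\<^sub>v ((l \<cdot>\<^sub>v \<zeta>) @\<^sub>v (l \<cdot>\<^sub>v \<mu>))"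
    using Mv' unfolding Mclg_mult[OF xC zC mC K n] smult_append u_def .
  moreover have c1: "plantAg n a *\<^sub>v x + plantBg n b *\<^sub>v scg u \<in> carrier_vec n"
    by (rule add_carrier_vec[OF mult_mat_vec_carrier[OF carriers(2) xC] mult_mat_vec_carrier[OF carriers(3) scg_carrier]])
  moreover have c2: "compg n c *\<^sub>v \<zeta> + Brg n *\<^sub>v scg u \<in> carrier_vec n"
    by (rule add_carrier_vec[OF mult_mat_vec_carrier[OF carriers(1) zC] mult_mat_vec_carrier[OF carriers(5) scg_carrier]])
  moreover have "l \<cdot>\<^sub>v x \<in> carrier_vec n" "l \<cdot>\<^sub>v \<zeta> \<in> carrier_vec n" using xC zC by auto
  ultimately have E1: "plantAg n a *\<^sub>v x + plantBg n b *\<^sub>v scg u = l \<cdot>\<^sub>v x"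
    and E2: "compg n c *\<^sub>v \<zeta> + Brg n *\<^sub>v scg u = l \<cdot>\<^sub>v \<zeta>"
    and E3': "compg n c *\<^sub>v \<mu> + Brg n *\<^sub>v (plantCg n *\<^sub>v x) = l \<cdot>\<^sub>v \<mu>"
    by (simp_all only: append_vec_eq)
  have E3: "compg n c *\<^sub>v \<mu> + Brg n *\<^sub>v scg y = l \<cdot>\<^sub>v \<mu>"
    using E3' plantCg_mult[OF xC n] unfolding y_def by simp
  have E2i: "\<And>i. i < n \<Longrightarrow> (compg n c *\<^sub>v \<zeta> + Brg n *\<^sub>v scg u) $ i = l * \<zeta> $ i"
    using E2 zC by simp
  have E3i: "\<And>i. i < n \<Longrightarrow> (compg n c *\<^sub>v \<mu> + Brg n *\<^sub>v scg y) $ i = l * \<mu> $ i"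
    using E3 mC by simp
  note gz = geo_comp[OF zC E2i n]
  note gm = geo_comp[OF mC E3i n]
  have uc: "u = cp * \<zeta> $ 0" using gz(2) unfolding cp_def .
  have yc: "y = cp * \<mu> $ 0" using gm(2) unfolding cp_def .
  have E1i: "l * x $ i = (if i = 0 then 0 else x $ (i - 1)) - a (n - i) * y + b (n - i) * u" if i: "i < n" for i
  proof -
    have "(plantAg n a *\<^sub>v x + plantBg n b *\<^sub>v scg u) $ i = l * x $ i" using E1 xC i by simp
    then show ?thesis using xC i n unfolding y_def
      by (simp add: plantAg_mult plantBg_mult del: index_mult_mat_vec)
  qed
  define ap where "ap = (\<Sum>i<n. a (n - i) * l^i)"
  define bp where "bp = (\<Sum>i<n. b (n - i) * l^i)"
  have key: "(l^n + ap) * y = bp * u"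
  proof -
    have "(\<Sum>i<n. l^i * (l * x $ i - (if i = 0 then 0 else x $ (i - 1)))) = l^n * (if n = 0 then 0 else x $ (n - 1))"
      by (rule telescope)
    then have "l^n * y = (\<Sum>i<n. l^i * (l * x $ i - (if i = 0 then 0 else x $ (i - 1))))"
      using n unfolding y_def by simp
    also have "\<dots> = (\<Sum>i<n. l^i * (b (n - i) * u - a (n - i) * y))"
      by (intro sum.cong refl) (simp add: E1i)
    also have "\<dots> = bp * u - ap * y"
      unfolding ap_def bp_def by (simp add: algebra_simps sum_distrib_right sum_distrib_left sum_subtractf)
    finally show ?thesis by (simp add: algebra_simps)
  qed
  show ?thesis
  proof (cases "cp = 0")
    case True
    then show ?thesis unfolding cp_def by simp
  next
    case False
    have AC: "Afg n a b c + Bfg n * K \<in> carrier_mat (n + n) (n + n)"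
      using K by (auto intro!: add_carrier_mat mult_carrier_mat[of _ _ 1] simp: Bfg_def)
    have nz: "\<zeta> @\<^sub>v \<mu> \<noteq> 0\<^sub>v (n + n)"
    proof
      assume w0: "\<zeta> @\<^sub>v \<mu> = 0\<^sub>v (n + n)"
      have z00: "\<zeta> $ 0 = 0" using arg_cong[OF w0, of "\<lambda>v. v $ 0"] zC n by simp
      have m00: "\<mu> $ 0 = 0" using arg_cong[OF w0, of "\<lambda>v. v $ n"] zC mC n by simp
      have u0: "u = 0" using uc z00 by simp
      have y0: "y = 0" using yc m00 by simp
      have xrec: "x $ (i - 1) = l * x $ i" if "i < n" "i \<ge> 1" for i
        using E1i[OF that(1)] that u0 y0 by simp
      have xk: "x $ (n - 1 - k) = 0" if "k < n" for k
        using that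
      proof (induction k)
        case 0
        then show ?case using y0 unfolding y_def by simp
      next
        case (Suc k)
        then have "x $ (n - 1 - k - 1) = l * x $ (n - 1 - k)" by (intro xrec) auto
        then show ?case using Suc by (simp add: diff_diff_add)
      qed
      have "x = 0\<^sub>v n"
      proof (rule eq_vecI)
        fix i assume "i < dim_vec (0\<^sub>v n :: 'a vec)"
        then have i: "i < n" by simp
        have "x $ (n - 1 - (n - 1 - i)) = 0" using xk[of "n - 1 - i"] i by simp
        then show "x $ i = 0\<^sub>v n $ i" using i by simp
      qed (use xC in simp)
      then have "x @\<^sub>v (\<zeta> @\<^sub>v \<mu>) = 0\<^sub>v (n + (n + n))" unfolding w0
        by (intro eq_vecI) auto
      then have "v = 0\<^sub>v (n + (n + n))" using vsplit by simp
      then show False using v0 by simp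
    qed
    have cancel: "bp * \<zeta> $ 0 = (l^n + ap) * \<mu> $ 0"
    proof -
      have "cp * (bp * \<zeta> $ 0) = cp * ((l^n + ap) * \<mu> $ 0)"
        using key uc yc by (simp add: algebra_simps)
      then show ?thesis using False by simp
    qed
    have low: "Lbg n b *\<^sub>v \<zeta> + compg n a *\<^sub>v \<mu> = l \<cdot>\<^sub>v \<mu>"
    proof (rule eq_vecI)
      fix i assume "i < dim_vec (l \<cdot>\<^sub>v \<mu>)"
      then have i: "i < n" using mC by simp
      show "(Lbg n b *\<^sub>v \<zeta> + compg n a *\<^sub>v \<mu>) $ i = (l \<cdot>\<^sub>v \<mu>) $ i"
      proof (cases "i < n - 1")
        case True
        have "(compg n c *\<^sub>v \<mu> + Brg n *\<^sub>v scg y) $ i = l * \<mu> $ i" by (rule E3i[OF i])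
        then have "\<mu> $ (i + 1) = l * \<mu> $ i" using True i mC
          by (simp add: compg_mult Brg_mult del: index_mult_mat_vec)
        then show ?thesis using True i mC zC
          by (simp add: compg_mult Lbg_mult del: index_mult_mat_vec)
      next
        case False
        then have i1: "i = n - 1" using i by simp
        have lhs: "(Lbg n b *\<^sub>v \<zeta> + compg n a *\<^sub>v \<mu>) $ i = bp * \<zeta> $ 0 - ap * \<mu> $ 0"
          using i i1 mC zC geo_sum[OF gz(1), of "\<lambda>j. b (n - j)"] geo_sum[OF gm(1), of "\<lambda>j. a (n - j)"]
          unfolding ap_def bp_def by (simp add: compg_mult Lbg_mult del: index_mult_mat_vec)
        have "\<mu> $ (n - 1) = l^(n-1) * \<mu> $ 0" using gm(1)[rule_format, of "n - 1"] n by linarith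
        moreover obtain m where m: "n = Suc m" using n by (cases n) auto
        ultimately have "l * \<mu> $ (n - 1) = l^n * \<mu> $ 0" by simp
        then show ?thesis using lhs cancel i mC i1 by (simp add: algebra_simps)
      qed
    qed (use mC in simp)
    have "(Afg n a b c + Bfg n * K) *\<^sub>v (\<zeta> @\<^sub>v \<mu>) = l \<cdot>\<^sub>v (\<zeta> @\<^sub>v \<mu>)"
      using Afg_mult[OF zC mC K, of a b c] E2 low unfolding u_def by (simp add: smult_append)
    then have "eigenvector (Afg n a b c + Bfg n * K) (\<zeta> @\<^sub>v \<mu>) l"
      unfolding eigenvector_def using AC nz zC mC by auto
    then show ?thesis unfolding eigenvalue_def by auto
  qed
qed


lemma map_mat_add_of_real:
  assumes "A \<in> carrier_mat nr nc" "B \<in> carrier_mat nr nc"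
  shows "map_mat complex_of_real (A + B) = map_mat complex_of_real A + map_mat complex_of_real B"
  by (rule eq_matI) (use assms in auto)

lemma map_zero_mat_of_real: "map_mat complex_of_real (0\<^sub>m nr nc) = 0\<^sub>m nr nc"
  by (rule eq_matI) auto

lemma map_Afg: "map_mat complex_of_real (Afg n a b c) =
    Afg n (\<lambda>i. complex_of_real (a i)) (\<lambda>i. complex_of_real (b i)) (\<lambda>i. complex_of_real (c i))"
  unfolding Afg_def
  by (subst map_four_block_mat[OF carriers(1) zero_carrier_mat carriers(6) carriers(1)])
     (simp add: map_eqs map_zero_mat_of_real)

lemma map_AfK:
  assumes K: "K \<in> carrier_mat 1 (n + n)"
  shows "map_mat complex_of_real (Afg n a b c + Bfg n * K) =
    Afg n (\<lambda>i. complex_of_real (a i)) (\<lambda>i. complex_of_real (b i)) (\<lambda>i. complex_of_real (c i))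
    + Bfg n * map_mat complex_of_real K"
proof -
  have BK: "Bfg n * K \<in> carrier_mat (n + n) (n + n)" using K by (auto simp: Bfg_def)
  show ?thesis
    unfolding map_mat_add_of_real[OF carriers(9) BK] of_real_hom.mat_hom_mult[OF carriers(7) K]
    by (simp add: map_Afg map_eqs)
qed

lemma map_Mclg:
  assumes K: "K \<in> carrier_mat 1 (n + n)"
  shows "map_mat complex_of_real (Mclg n a b c K) =
    Mclg n (\<lambda>i. complex_of_real (a i)) (\<lambda>i. complex_of_real (b i)) (\<lambda>i. complex_of_real (c i))
      (map_mat complex_of_real K)"
proof -
  have BK: "Bfg n * K \<in> carrier_mat (n + n) (n + n)" using K by (auto simp: Bfg_def)
  have PK: "plantBg n b * K \<in> carrier_mat n (n + n)" using K by (auto simp: plantBg_def)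
  have FB: "four_block_mat (compg n c) (0\<^sub>m n n) (0\<^sub>m n n) (compg n c) \<in> carrier_mat (n + n) (n + n)"
    by (intro four_block_carrier_mat) auto
  have G: "four_block_mat (compg n c) (0\<^sub>m n n) (0\<^sub>m n n) (compg n c) + Bfg n * K \<in> carrier_mat (n + n) (n + n)"
    using FB BK by auto
  show ?thesis
    unfolding Mclg_def map_four_block_mat[OF carriers(2) PK carriers(8) G]
      map_mat_add_of_real[OF FB BK] of_real_hom.mat_hom_mult[OF carriers(7) K]
      of_real_hom.mat_hom_mult[OF carriers(3) K]
      map_four_block_mat[OF carriers(1) zero_carrier_mat zero_carrier_mat carriers(1)]
    by (simp add: map_eqs map_zero_mat_of_real)
qed

lemma Mcl_hurwitz:
  assumes n: "n \<ge> 1" and K: "Kf \<in> carrier_mat 1 (n + n)"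
    and HA: "hurwitz_mat (A_f n a b c + B_f n * Kf)"
    and HP: "hurwitz_poly (monic_poly n c)"
  shows "hurwitz_mat (Mclg n a b c Kf)"
  unfolding hurwitz_mat_def
proof (intro allI impI)
  fix ev assume ev: "eigenvalue (map_mat complex_of_real (Mclg n a b c Kf)) ev"
  let ?Kc = "map_mat complex_of_real Kf"
  have Kc: "?Kc \<in> carrier_mat 1 (n + n)" using K by auto
  from eig_arg[OF n Kc ev[unfolded map_Mclg[OF K]]]
  show "Re ev < 0"
  proof
    assume "ev^n + (\<Sum>k=1..n. complex_of_real (c k) * ev^(n-k)) = 0"
    then have "poly (map_poly complex_of_real (monic_poly n c)) ev = 0" by (simp add: poly_monic_c)
    then show ?thesis using HP unfolding hurwitz_poly_def by auto
  next
    assume "eigenvalue (Afg n (\<lambda>i. complex_of_real (a i)) (\<lambda>i. complex_of_real (b i)) (\<lambda>i. complex_of_real (c i)) + Bfg n * ?Kc) ev"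
    then have "eigenvalue (map_mat complex_of_real (A_f n a b c + B_f n * Kf)) ev"
      unfolding real_eqs map_AfK[OF K] .
    then show ?thesis using HA unfolding hurwitz_mat_def by auto
  qed
qed

lemma sum_split_add: "(\<Sum>i<(m::nat)+k. f i) = (\<Sum>i<m. f i) + (\<Sum>i<k. f (m + i))"
  by (induction k) (simp_all add: add_ac)

lemma sol_deriv:
  assumes n: "n \<ge> 1" and K: "Kf \<in> carrier_mat 1 (n + n)"
    and sol: "closed_loop_sol n a b c Kf x \<zeta> \<mu>" and t: "t \<ge> 0"
  shows "vec_deriv (n + (n + n)) (\<lambda>s. x s @\<^sub>v (\<zeta> s @\<^sub>v \<mu> s))
           (Mclg n a b c Kf *\<^sub>v (x t @\<^sub>v (\<zeta> t @\<^sub>v \<mu> t))) t"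
proof -
  have xC: "\<And>s. x s \<in> carrier_vec n" and zC: "\<And>s. \<zeta> s \<in> carrier_vec n" and mC: "\<And>s. \<mu> s \<in> carrier_vec n"
    using sol unfolding closed_loop_sol_def by auto
  define u where "u = (Kf *\<^sub>v (\<zeta> t @\<^sub>v \<mu> t)) $ 0"
  have scu: "sc u = scg u" by (simp add: sc_def scg_def)
  have d0: "vec_deriv n x (plant_A n a *\<^sub>v x t + plant_B n b *\<^sub>v sc u) t"
          "vec_deriv n \<zeta> (A_r n c *\<^sub>v \<zeta> t + B_r n *\<^sub>v sc u) t"
          "vec_deriv n \<mu> (A_r n c *\<^sub>v \<mu> t + B_r n *\<^sub>v (plant_C n *\<^sub>v x t)) t"
    using sol t unfolding closed_loop_sol_def Let_def u_def by auto
  note d = d0[unfolded real_eqs scu]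
  have xd: "dim_vec (x s) = n" and zd: "dim_vec (\<zeta> s) = n" and md: "dim_vec (\<mu> s) = n" for s
    using xC zC mC by auto
  show ?thesis
    unfolding vec_deriv_def Mclg_mult[OF xC zC mC K n] u_def[symmetric]
  proof (intro allI impI)
    fix i assume i: "i < n + (n + n)"
    show "((\<lambda>s. (x s @\<^sub>v (\<zeta> s @\<^sub>v \<mu> s)) $ i) has_real_derivative
      ((plantAg n a *\<^sub>v x t + plantBg n b *\<^sub>v scg u) @\<^sub>v
       ((compg n c *\<^sub>v \<zeta> t + Brg n *\<^sub>v scg u) @\<^sub>v (compg n c *\<^sub>v \<mu> t + Brg n *\<^sub>v (plantCg n *\<^sub>v x t)))) $ i)
      (at t within {0..})"
    proof (cases "i < n")
      case True
      then show ?thesis using d(1) unfolding vec_deriv_def by (simp add: xd)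
    next
      case False
      show ?thesis
      proof (cases "i - n < n")
        case True
        then show ?thesis using d(2) False unfolding vec_deriv_def by (simp add: xd zd)
      next
        case False2: False
        then have "i - n - n < n" using i by linarith
        then show ?thesis using d(3) False False2 unfolding vec_deriv_def by (simp add: xd zd md)
      qed
    qed
  qed
qed

theorem corollary1:
  fixes n :: nat and a b c :: "nat \<Rightarrow> real" and Kf :: "real mat"
  assumes "n \<ge> 1"
    and "assumption1 n a b"
    and "Kf \<in> carrier_mat 1 (2 * n)"
    and "hurwitz_mat (A_f n a b c + B_f n * Kf)"
    and "hurwitz_poly (monic_poly n c)"
  shows "closed_loop_GAS n a b c Kf"
proof -
  have n: "n \<ge> 1" by fact
  have K: "Kf \<in> carrier_mat 1 (n + n)" using assms(3) by (simp add: mult_2)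
  let ?M = "Mclg n a b c Kf"
  let ?N = "n + (n + n)"
  have MC: "?M \<in> carrier_mat ?N ?N" by (rule Mclg_carrier[OF K])
  have HM: "hurwitz_mat ?M" by (rule Mcl_hurwitz[OF n K assms(4) assms(5)])
  obtain Kd \<alpha> where Kd: "Kd \<ge> 0" and a: "\<alpha> > 0" and dec: "\<And>z. (\<forall>t. z t \<in> carrier_vec ?N) \<Longrightarrow>
     (\<forall>t\<ge>0. vec_deriv ?N z (?M *\<^sub>v z t) t) \<Longrightarrow>
     (\<forall>t\<ge>0. (\<Sum>i<?N. (z t $ i)\<^sup>2) \<le> Kd * exp (- \<alpha> * t) * (\<Sum>i<?N. (z 0 $ i)\<^sup>2))"
    using hurwitz_decay[OF MC HM] by blast
  have main: "\<forall>t\<ge>0. (state_norm n (x t) (\<zeta> t) (\<mu> t))\<^sup>2 \<le> Kd * exp (- \<alpha> * t) * (state_norm n (x 0) (\<zeta> 0) (\<mu> 0))\<^sup>2"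
    if sol: "closed_loop_sol n a b c Kf x \<zeta> \<mu>" for x \<zeta> \<mu>
  proof -
    have xC: "\<And>s. x s \<in> carrier_vec n" and zC: "\<And>s. \<zeta> s \<in> carrier_vec n" and mC: "\<And>s. \<mu> s \<in> carrier_vec n"
      using sol unfolding closed_loop_sol_def by auto
    define z where "z s = x s @\<^sub>v (\<zeta> s @\<^sub>v \<mu> s)" for s
    have zzC: "\<forall>t. z t \<in> carrier_vec ?N" unfolding z_def using xC zC mC by auto
    have zzd: "\<forall>t\<ge>0. vec_deriv ?N z (?M *\<^sub>v z t) t"
      unfolding z_def using sol_deriv[OF n K sol] by auto
    have sn: "(state_norm n (x s) (\<zeta> s) (\<mu> s))\<^sup>2 = (\<Sum>i<?N. (z s $ i)\<^sup>2)" for s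
    proof -
      have xd: "dim_vec (x s) = n" and zd: "dim_vec (\<zeta> s) = n" and md: "dim_vec (\<mu> s) = n"
        using xC zC mC by auto
      have "(\<Sum>i<?N. (z s $ i)\<^sup>2) = (\<Sum>i<n. (x s $ i)\<^sup>2) + (\<Sum>i<n. (\<zeta> s $ i)\<^sup>2) + (\<Sum>i<n. (\<mu> s $ i)\<^sup>2)"
        unfolding sum_split_add z_def by (simp add: xd zd md)
      also have "\<dots> = (\<Sum>i<n. (x s $ i)\<^sup>2 + (\<zeta> s $ i)\<^sup>2 + (\<mu> s $ i)\<^sup>2)"
        by (simp add: sum.distrib)
      finally show ?thesis unfolding state_norm_def
        by (simp add: sum_nonneg)
    qed
    show ?thesis using dec[OF zzC zzd] unfolding sn by simp
  qed
  show ?thesis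
    unfolding closed_loop_GAS_def
  proof (intro conjI allI impI)
    fix \<epsilon> :: real assume e: "\<epsilon> > 0"
    define \<delta> where "\<delta> = \<epsilon> / sqrt (Kd + 1)"
    have d0: "\<delta> > 0" unfolding \<delta>_def using e Kd by simp
    show "\<exists>\<delta>>0. \<forall>x \<zeta> \<mu>. closed_loop_sol n a b c Kf x \<zeta> \<mu> \<longrightarrow>
          state_norm n (x 0) (\<zeta> 0) (\<mu> 0) < \<delta> \<longrightarrow> (\<forall>t\<ge>0. state_norm n (x t) (\<zeta> t) (\<mu> t) < \<epsilon>)"
    proof (intro exI[of _ \<delta>] conjI d0 allI impI)
      fix x \<zeta> \<mu> and t :: real
      assume sol: "closed_loop_sol n a b c Kf x \<zeta> \<mu>" and s0: "state_norm n (x 0) (\<zeta> 0) (\<mu> 0) < \<delta>"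
        and t: "t \<ge> 0"
      let ?S0 = "(state_norm n (x 0) (\<zeta> 0) (\<mu> 0))\<^sup>2"
      let ?St = "(state_norm n (x t) (\<zeta> t) (\<mu> t))\<^sup>2"
      have nn: "state_norm n v w y \<ge> 0" for v w y unfolding state_norm_def by (intro real_sqrt_ge_zero sum_nonneg) auto
      have S0: "?S0 < \<delta>\<^sup>2" using s0 nn by (intro power_strict_mono) auto
      have "?St \<le> Kd * exp (- \<alpha> * t) * ?S0" using main[OF sol] t by auto
      also have "\<dots> \<le> Kd * ?S0"
      proof -
        have e1: "exp (- \<alpha> * t) \<le> 1" using a t by simp
        have "Kd * exp (- \<alpha> * t) * ?S0 \<le> Kd * 1 * ?S0"
          by (intro mult_right_mono mult_left_mono e1 Kd) simp
        then show ?thesis by simp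
      qed
      also have "\<dots> \<le> Kd * \<delta>\<^sup>2" using S0 Kd by (intro mult_left_mono) auto
      also have "\<dots> < \<epsilon>\<^sup>2"
      proof -
        have "\<delta>\<^sup>2 = \<epsilon>\<^sup>2 / (Kd + 1)" unfolding \<delta>_def using Kd by (simp add: power_divide)
        then have "Kd * \<delta>\<^sup>2 = \<epsilon>\<^sup>2 * (Kd / (Kd + 1))" by simp
        also have "\<dots> < \<epsilon>\<^sup>2 * 1" using e Kd by (intro mult_strict_left_mono) auto
        finally show ?thesis by simp
      qed
      finally have "?St < \<epsilon>\<^sup>2" .
      then show "state_norm n (x t) (\<zeta> t) (\<mu> t) < \<epsilon>"
        by (rule power2_less_imp_less) (use e in auto)
    qed
  next
    fix x \<zeta> \<mu> assume sol: "closed_loop_sol n a b c Kf x \<zeta> \<mu>"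
    let ?S0 = "(state_norm n (x 0) (\<zeta> 0) (\<mu> 0))\<^sup>2"
    have nn: "state_norm n v w y \<ge> 0" for v w y unfolding state_norm_def by (intro real_sqrt_ge_zero sum_nonneg) auto
    have lim0: "((\<lambda>t. exp (- \<alpha> * t)) \<longlongrightarrow> 0) at_top"
    proof -
      have "LIM t at_top. \<alpha> * t :> at_top"
        by (rule filterlim_tendsto_pos_mult_at_top[OF tendsto_const a filterlim_ident])
      then have "LIM t at_top. - (\<alpha> * t) :> at_bot" by (simp add: filterlim_uminus_at_top)
      then show ?thesis using filterlim_compose[OF exp_at_bot] by auto
    qed
    have g: "((\<lambda>t. sqrt (Kd * exp (- \<alpha> * t) * ?S0)) \<longlongrightarrow> 0) at_top"
    proof -
      have "((\<lambda>t. Kd * exp (- \<alpha> * t) * ?S0) \<longlongrightarrow> Kd * 0 * ?S0) at_top"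
        by (intro tendsto_mult tendsto_const lim0)
      from tendsto_real_sqrt[OF this] show ?thesis by simp
    qed
    show "((\<lambda>t. state_norm n (x t) (\<zeta> t) (\<mu> t)) \<longlongrightarrow> 0) at_top"
    proof (rule tendsto_sandwich[OF _ _ tendsto_const g])
      show "\<forall>\<^sub>F t in at_top. 0 \<le> state_norm n (x t) (\<zeta> t) (\<mu> t)" using nn by simp
      show "\<forall>\<^sub>F t in at_top. state_norm n (x t) (\<zeta> t) (\<mu> t) \<le> sqrt (Kd * exp (- \<alpha> * t) * ?S0)"
        using eventually_ge_at_top[of "0::real"]
      proof (rule eventually_mono)
        fix t :: real assume t: "t \<ge> 0"
        have "(state_norm n (x t) (\<zeta> t) (\<mu> t))\<^sup>2 \<le> Kd * exp (- \<alpha> * t) * ?S0"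
          using main[OF sol] t by blast
        then show "state_norm n (x t) (\<zeta> t) (\<mu> t) \<le> sqrt (Kd * exp (- \<alpha> * t) * ?S0)"
          using nn real_le_rsqrt by blast
      qed
    qed
  qed
qed


end
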